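(* Let $f$ be a $C^{1+\alpha}$ diffeomorphism of $M=\mathbb{R}^d/\mathbb{Z}^d$, $\Lambda$ an invariant set and $n$ a positive integer such that for every $x\in\Lambda$, $\Gamma_{o(x)}$ has a continuous inverse $\Upsilon_{o(x)}$ on $X_n$, and for a positive integer $m$ let $\Lambda^*_m=\{x\in\Lambda:\|\Upsilon_{o(x)}\|_n\le m\}$. Then there exists $\delta>0$ such that if $\mathbf{y}$ is a $\delta$-pseudoorbit with every $y_j$ in the $\delta$-neighborhood of $\Lambda^*_m$, then there is a continuous linear operator $\tilde\Theta$ on $X_n$ with $\|\tilde\Theta\Gamma_{\mathbf{y}}-I\|_n\le1/2$ and $\|\tilde\Theta\|_n\le md\sqrt d$.
   Context: Tangent spaces identified with $\mathbb{R}^d$; distances on $M$ written $|x-y|$. $o(x)=(f^k(x))_k$; for $\mathbf{x}\in M^{\mathbb{Z}}$, $(\Gamma_{\mathbf{x}}\eta)_k=\eta_k-Df(x_{k-1})\eta_{k-1}$. $\|\eta\|_n=\sup_k e^{-|k|/n}|\eta_k|$, $X_n=\{\|\eta\|_n<\infty\}$, with operator norm also denoted $\|\cdot\|_n$. $\mathbf{y}$ is a $\delta$-pseudoorbit if $|f(y_{k-1})-y_k|<\delta$ for all $k$. *)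

theory Defs
  imports "HOL-Analysis.Analysis"
begin

text \<open>The torus M = R^d / Z^d is represented by R^d (type real^'d), points being
representatives modulo the integer lattice Zd.\<close>

definition Zd :: "(real^'d) set" where
  "Zd = {v. \<forall>i. v $ i \<in> \<int>}"

definition tdist :: "real^'d \<Rightarrow> real^'d \<Rightarrow> real" where
  "tdist x y = infdist (x - y) Zd"

text \<open>A subset of M, represented by its (Zd-saturated) preimage in R^d.\<close>
definition torus_set :: "(real^'d) set \<Rightarrow> bool" where
  "torus_set S \<longleftrightarrow> (\<forall>x\<in>S. \<forall>k\<in>Zd. x + k \<in> S)"

text \<open>f (a lift to R^d) induces a C^{1+alpha} diffeomorphism of the torus, with derivative Df.\<close>
definition C1a_torus_diffeo ::
  "(real^'d \<Rightarrow> real^'d) \<Rightarrow> (real^'d \<Rightarrow> ((real^'d) \<Rightarrow>\<^sub>L (real^'d))) \<Rightarrow> bool" where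
  "C1a_torus_diffeo f Df \<longleftrightarrow>
     (\<forall>x k. k \<in> Zd \<longrightarrow> f (x + k) - f x \<in> Zd) \<and>
     (\<forall>x. (f has_derivative blinfun_apply (Df x)) (at x)) \<and>
     (\<exists>\<alpha> C. 0 < \<alpha> \<and> \<alpha> \<le> 1 \<and> (\<forall>x y. norm (Df x - Df y) \<le> C * tdist x y powr \<alpha>)) \<and>
     (\<exists>g Dg. (\<forall>x k. k \<in> Zd \<longrightarrow> g (x + k) - g x \<in> Zd) \<and>
        (\<forall>x. (g has_derivative blinfun_apply (Dg x)) (at x)) \<and> continuous_on UNIV Dg \<and>
        (\<forall>x. g (f x) - x \<in> Zd) \<and> (\<forall>y. f (g y) - y \<in> Zd))"

text \<open>Inverse of f on the torus (any representative).\<close>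
definition finv :: "(real^'d \<Rightarrow> real^'d) \<Rightarrow> real^'d \<Rightarrow> real^'d" where
  "finv f y = (SOME x. f x - y \<in> Zd)"

definition orbit :: "(real^'d \<Rightarrow> real^'d) \<Rightarrow> real^'d \<Rightarrow> int \<Rightarrow> real^'d" where
  "orbit f x k = (if 0 \<le> k then (f ^^ nat k) x else (finv f ^^ nat (- k)) x)"

definition Gamma :: "(real^'d \<Rightarrow> ((real^'d) \<Rightarrow>\<^sub>L (real^'d))) \<Rightarrow> (int \<Rightarrow> real^'d)
     \<Rightarrow> (int \<Rightarrow> real^'d) \<Rightarrow> (int \<Rightarrow> real^'d)" where
  "Gamma Df x \<eta> = (\<lambda>k. \<eta> k - Df (x (k - 1)) (\<eta> (k - 1)))"

definition Xn :: "nat \<Rightarrow> (int \<Rightarrow> real^'d) set" where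
  "Xn n = {\<eta>. bdd_above (range (\<lambda>k. exp (- \<bar>real_of_int k\<bar> / real n) * norm (\<eta> k)))}"

definition wnorm :: "nat \<Rightarrow> (int \<Rightarrow> real^'d) \<Rightarrow> real" where
  "wnorm n \<eta> = (SUP k. exp (- \<bar>real_of_int k\<bar> / real n) * norm (\<eta> k))"

definition bounded_op :: "nat \<Rightarrow> ((int \<Rightarrow> real^'d) \<Rightarrow> (int \<Rightarrow> real^'d)) \<Rightarrow> bool" where
  "bounded_op n T \<longleftrightarrow>
     (\<forall>\<eta>\<in>Xn n. T \<eta> \<in> Xn n) \<and>
     (\<forall>\<eta>\<in>Xn n. \<forall>\<zeta>\<in>Xn n. T (\<lambda>k. \<eta> k + \<zeta> k) = (\<lambda>k. T \<eta> k + T \<zeta> k)) \<and>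
     (\<forall>c. \<forall>\<eta>\<in>Xn n. T (\<lambda>k. c *\<^sub>R \<eta> k) = (\<lambda>k. c *\<^sub>R T \<eta> k)) \<and>
     (\<exists>C. \<forall>\<eta>\<in>Xn n. wnorm n (T \<eta>) \<le> C * wnorm n \<eta>)"

definition op_norm :: "nat \<Rightarrow> ((int \<Rightarrow> real^'d) \<Rightarrow> (int \<Rightarrow> real^'d)) \<Rightarrow> real" where
  "op_norm n T = Sup ((\<lambda>\<eta>. wnorm n (T \<eta>)) ` {\<eta> \<in> Xn n. wnorm n \<eta> \<le> 1})"

definition cont_inverse :: "nat \<Rightarrow> ((int \<Rightarrow> real^'d) \<Rightarrow> (int \<Rightarrow> real^'d))
     \<Rightarrow> ((int \<Rightarrow> real^'d) \<Rightarrow> (int \<Rightarrow> real^'d)) \<Rightarrow> bool" where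
  "cont_inverse n T U \<longleftrightarrow> (\<forall>\<eta>\<in>Xn n. T \<eta> \<in> Xn n) \<and> bounded_op n U \<and>
     (\<forall>\<eta>\<in>Xn n. U (T \<eta>) = \<eta> \<and> T (U \<eta>) = \<eta>)"

text \<open>Lambda*_m = {x in Lambda. ||Upsilon_{o(x)}||_n \<le> m} (the inverse is unique on X_n).\<close>
definition Lstar :: "(real^'d \<Rightarrow> real^'d) \<Rightarrow> (real^'d \<Rightarrow> ((real^'d) \<Rightarrow>\<^sub>L (real^'d)))
     \<Rightarrow> nat \<Rightarrow> nat \<Rightarrow> (real^'d) set \<Rightarrow> (real^'d) set" where
  "Lstar f Df n m \<Lambda> = {x \<in> \<Lambda>. \<exists>U. cont_inverse n (Gamma Df (orbit f x)) U \<and> op_norm n U \<le> real m}"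

definition pseudo_orbit :: "(real^'d \<Rightarrow> real^'d) \<Rightarrow> real \<Rightarrow> (int \<Rightarrow> real^'d) \<Rightarrow> bool" where
  "pseudo_orbit f \<delta> y \<longleftrightarrow> (\<forall>k. tdist (f (y (k - 1))) (y k) < \<delta>)"

end

theory Submission
  imports Defs
begin


lemma Zd_0: "0 \<in> Zd" by (simp add: Zd_def)
lemma Zd_add: "a \<in> Zd \<Longrightarrow> b \<in> Zd \<Longrightarrow> a + b \<in> Zd" by (simp add: Zd_def)
lemma Zd_diff: "a \<in> Zd \<Longrightarrow> b \<in> Zd \<Longrightarrow> a - b \<in> Zd" by (simp add: Zd_def)
lemma Zd_uminus: "a \<in> Zd \<Longrightarrow> - a \<in> Zd" by (simp add: Zd_def)
lemma Zd_floor: "((\<chi> i. of_int (floor (x $ i))) :: real^'d) \<in> Zd" by (simp add: Zd_def)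

lemma tdist_le: "k \<in> Zd \<Longrightarrow> tdist x y \<le> norm (x - y - k)"
  unfolding tdist_def using infdist_le[of k Zd "x - y"] by (simp add: dist_norm)

lemma tdist_nonneg: "0 \<le> tdist x y" by (simp add: tdist_def infdist_nonneg)

lemma tdist_lt_ex: assumes "tdist x y < e" shows "\<exists>k\<in>Zd. norm (x - y - k) < e"
proof -
  have ne: "Zd \<noteq> {}" using Zd_0 by auto
  have "(INF a\<in>Zd. dist (x - y) a) < e" using assms unfolding tdist_def infdist_notempty[OF ne] by simp
  then obtain a where "a \<in> Zd" "dist (x - y) a < e"
    using cINF_less_iff[of Zd "dist (x-y)" e] ne by auto
  then show ?thesis by (auto simp: dist_norm)
qed

lemma tdist_lt_I: "k \<in> Zd \<Longrightarrow> norm (x - y - k) < e \<Longrightarrow> tdist x y < e"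
  using tdist_le[of k x y] by linarith

lemma tdist_sym: "tdist x y < e \<Longrightarrow> tdist y x < e"
proof -
  assume "tdist x y < e"
  then obtain k where k: "k \<in> Zd" "norm (x - y - k) < e" using tdist_lt_ex by blast
  have "norm (y - x - (-k)) = norm (x - y - k)" by (metis minus_diff_eq norm_minus_cancel diff_minus_eq_add add.commute diff_diff_eq2)
  then show ?thesis using k Zd_uminus[OF k(1)] tdist_lt_I by metis
qed

lemma tdist_triangle: "tdist x y < a \<Longrightarrow> tdist y z < b \<Longrightarrow> tdist x z < a + b"
proof -
  assume "tdist x y < a" "tdist y z < b"
  then obtain k1 k2 where k: "k1 \<in> Zd" "norm (x - y - k1) < a" "k2 \<in> Zd" "norm (y - z - k2) < b"
    using tdist_lt_ex by metis
  have "norm (x - z - (k1 + k2)) \<le> norm (x - y - k1) + norm (y - z - k2)"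
    using norm_triangle_ineq[of "x - y - k1" "y - z - k2"] by (simp add: algebra_simps)
  then show ?thesis using k Zd_add tdist_lt_I[of "k1+k2" x z "a+b"] by fastforce
qed

lemma tdist_shift: "tdist x y < e \<Longrightarrow> x' - x \<in> Zd \<Longrightarrow> y' - y \<in> Zd \<Longrightarrow> tdist x' y' < e"
proof -
  assume "tdist x y < e" and h: "x' - x \<in> Zd" "y' - y \<in> Zd"
  then obtain k where k: "k \<in> Zd" "norm (x - y - k) < e" using tdist_lt_ex by metis
  have "x' - y' - (k + (x' - x) - (y' - y)) = x - y - k" by (simp add: algebra_simps)
  then show ?thesis using k h Zd_add Zd_diff tdist_lt_I by metis
qed

lemma tdist_bound: "tdist x y \<le> real CARD('d)" for x y :: "real^'d"
proof -
  let ?v = "x - y" let ?k = "(\<chi> i. of_int (floor (?v $ i))) :: real^'d"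
  have "tdist x y \<le> norm (?v - ?k)" by (rule tdist_le[OF Zd_floor])
  also have "\<dots> \<le> sum (\<lambda>i. \<bar>(?v - ?k) $ i\<bar>) UNIV" by (rule norm_le_l1_cart)
  also have "\<dots> \<le> sum (\<lambda>i. 1) (UNIV::'d set)"
  proof (rule sum_mono)
    fix i
    have "0 \<le> ?v $ i - of_int (floor (?v $ i))" "?v $ i - of_int (floor (?v $ i)) < 1"
      by linarith+
    then show "\<bar>(?v - ?k) $ i\<bar> \<le> 1" by simp
  qed
  finally show ?thesis by simp
qed



definition flv :: "real^'d \<Rightarrow> real^'d" where "flv v = (\<chi> i. of_int (floor (v $ i)))"

lemma flv_Zd: "flv v \<in> Zd" unfolding flv_def by (rule Zd_floor)

lemma frac_norm: fixes v :: "real^'d" shows "norm (v - flv v) \<le> real CARD('d)"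
proof -
  have "norm (v - flv v) \<le> sum (\<lambda>i. \<bar>(v - flv v) $ i\<bar>) UNIV" by (rule norm_le_l1_cart)
  also have "\<dots> \<le> sum (\<lambda>i. 1) (UNIV::'d set)"
  proof (rule sum_mono)
    fix i
    have "0 \<le> v $ i - of_int (floor (v $ i))" "v $ i - of_int (floor (v $ i)) < 1"
      by linarith+
    then show "\<bar>(v - flv v) $ i\<bar> \<le> 1" by (simp add: flv_def)
  qed
  finally show ?thesis by simp
qed

lemma tdist_uc:
  fixes h :: "real^'d \<Rightarrow> real^'d"
  assumes cont: "continuous_on UNIV h" and per: "\<forall>x k. k\<in>Zd \<longrightarrow> h (x+k) - h x \<in> Zd" and "\<epsilon> > 0"
  shows "\<exists>\<delta>>0. \<forall>a b. tdist a b < \<delta> \<longrightarrow> tdist (h a) (h b) < \<epsilon>"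
proof -
  let ?S = "cball (0::real^'d) (real CARD('d) + 1)"
  have "uniformly_continuous_on ?S h"
    by (rule compact_uniformly_continuous) (auto intro: continuous_on_subset[OF cont])
  then obtain d where d: "d > 0" "\<forall>x\<in>?S. \<forall>x'\<in>?S. dist x' x < d \<longrightarrow> dist (h x') (h x) < \<epsilon>"
    using assms(3) unfolding uniformly_continuous_on_def by metis
  show ?thesis
  proof (intro exI[of _ "min d 1"] conjI allI impI)
    show "0 < min d 1" using d by simp
    fix a b :: "real^'d" assume "tdist a b < min d 1"
    then obtain k where k: "k \<in> Zd" "norm (a - b - k) < min d 1" using tdist_lt_ex by blast
    define a0 where "a0 = a - flv a"
    define b0 where "b0 = b + k - flv a"
    have na0: "norm a0 \<le> real CARD('d)" unfolding a0_def using frac_norm[of a] by simp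
    have ab0: "a0 - b0 = a - b - k" unfolding a0_def b0_def by (simp add: algebra_simps)
    have "norm b0 \<le> norm a0 + norm (a0 - b0)"
      using norm_triangle_ineq4[of a0 "a0 - b0"] by simp
    then have nb0: "norm b0 \<le> real CARD('d) + 1" using na0 ab0 k by simp
    have "a0 \<in> ?S" "b0 \<in> ?S" "dist a0 b0 < d" using na0 nb0 ab0 k by (auto simp: dist_norm)
    then have "dist (h a0) (h b0) < \<epsilon>"
      using d(2) by blast
    then have t0: "tdist (h a0) (h b0) < \<epsilon>"
      using tdist_lt_I[OF Zd_0, of "h a0" "h b0" \<epsilon>] by (simp add: dist_norm)
    have e1: "h a - h a0 \<in> Zd" using per flv_Zd[of a] unfolding a0_def by (metis diff_add_cancel)
    have e2: "h (b + k) - h b \<in> Zd" using per k(1) by blast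
    have e3: "h (b + k) - h b0 \<in> Zd" using per flv_Zd[of a] unfolding b0_def by (metis diff_add_cancel)
    have "h b - h b0 = (h (b + k) - h b0) - (h (b + k) - h b)" by simp
    then have e4: "h b - h b0 \<in> Zd" using e2 e3 Zd_diff by metis
    show "tdist (h a) (h b) < \<epsilon>" by (rule tdist_shift[OF t0 e1 e4])
  qed
qed



lemma pseudo_mono: "pseudo_orbit f d y \<Longrightarrow> d \<le> e \<Longrightarrow> pseudo_orbit f e y"
  unfolding pseudo_orbit_def by (meson less_le_trans)

lemma C1a_f_uc:
  assumes "C1a_torus_diffeo f Df" "\<epsilon> > 0"
  shows "\<exists>\<delta>>0. \<forall>a b. tdist a b < \<delta> \<longrightarrow> tdist (f a) (f b) < \<epsilon>"
proof (rule tdist_uc)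
  have "\<forall>x. (f has_derivative blinfun_apply (Df x)) (at x)" using assms(1) unfolding C1a_torus_diffeo_def by blast
  then have "\<forall>x. isCont f x" using has_derivative_continuous by blast
  then show "continuous_on UNIV f" by (simp add: continuous_at_imp_continuous_on)
  show "\<forall>x k. k \<in> Zd \<longrightarrow> f (x + k) - f x \<in> Zd" using assms(1) unfolding C1a_torus_diffeo_def by blast
qed (rule assms(2))

lemma C1a_g:
  assumes "C1a_torus_diffeo f Df"
  obtains g where "\<forall>\<epsilon>>0. \<exists>\<delta>>0. \<forall>a b. tdist a b < \<delta> \<longrightarrow> tdist (g a) (g b) < \<epsilon>"
    "\<forall>a. finv f a - g a \<in> Zd" "\<forall>b. b - g (f b) \<in> Zd"
proof -
  obtain g Dg where g: "\<forall>x k. k \<in> Zd \<longrightarrow> g (x + k) - g x \<in> Zd"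
        "\<forall>x. (g has_derivative blinfun_apply (Dg x)) (at x)"
        "\<forall>x. g (f x) - x \<in> Zd" "\<forall>y. f (g y) - y \<in> Zd"
    using assms unfolding C1a_torus_diffeo_def by blast
  have "\<forall>x. isCont g x" using g(2) has_derivative_continuous by blast
  then have cg: "continuous_on UNIV g" by (simp add: continuous_at_imp_continuous_on)
  have 1: "\<forall>\<epsilon>>0. \<exists>\<delta>>0. \<forall>a b. tdist a b < \<delta> \<longrightarrow> tdist (g a) (g b) < \<epsilon>"
    using tdist_uc[OF cg g(1)] by blast
  have 2: "finv f a - g a \<in> Zd" for a
  proof -
    have "f (finv f a) - a \<in> Zd" unfolding finv_def by (rule someI[of _ "g a"]) (use g(4) in blast)
    then obtain k where k: "k \<in> Zd" "f (finv f a) = a + k" by (intro that[of "f (finv f a) - a"]) auto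
    have "g (f (finv f a)) - finv f a \<in> Zd" using g(3) by blast
    moreover have "g (a + k) - g a \<in> Zd" using g(1) k(1) by blast
    ultimately have "(g (a + k) - g a) - (g (f (finv f a)) - finv f a) \<in> Zd" by (rule Zd_diff[rotated])
    then show ?thesis using k(2) by simp
  qed
  have 3: "b - g (f b) \<in> Zd" for b using g(3) Zd_uminus by (metis minus_diff_eq)
  show ?thesis using that 1 2 3 by blast
qed

lemma shadow_fwd:
  assumes "C1a_torus_diffeo f Df"
  shows "\<forall>\<rho>>0. \<exists>\<delta>>0. \<forall>y j z. pseudo_orbit f \<delta> y \<and> tdist z (y j) < \<delta> \<longrightarrow>
           (\<forall>i\<le>N. tdist ((f^^i) z) (y (j + int i)) < \<rho>)"
proof (induction N)
  case 0
  show ?case by (intro allI impI, rule_tac x=\<rho> in exI) auto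
next
  case (Suc N)
  show ?case
  proof (intro allI impI)
    fix \<rho> :: real assume r: "\<rho> > 0"
    obtain e1 where e1: "e1 > 0" "\<forall>a b. tdist a b < e1 \<longrightarrow> tdist (f a) (f b) < \<rho>/2"
      using C1a_f_uc[OF assms, of "\<rho>/2"] r by auto
    obtain d1 where d1: "d1 > 0" "\<forall>y j z. pseudo_orbit f d1 y \<and> tdist z (y j) < d1 \<longrightarrow>
           (\<forall>i\<le>N. tdist ((f^^i) z) (y (j + int i)) < min \<rho> e1)"
      using Suc[rule_format, of "min \<rho> e1"] r e1(1) by auto
    show "\<exists>\<delta>>0. \<forall>y j z. pseudo_orbit f \<delta> y \<and> tdist z (y j) < \<delta> \<longrightarrow>
           (\<forall>i\<le>Suc N. tdist ((f^^i) z) (y (j + int i)) < \<rho>)"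
    proof (intro exI[of _ "min d1 (\<rho>/2)"] conjI allI impI)
      show "0 < min d1 (\<rho>/2)" using d1 r by simp
      fix y j z i assume h: "pseudo_orbit f (min d1 (\<rho>/2)) y \<and> tdist z (y j) < min d1 (\<rho>/2)"
        and i: "i \<le> Suc N"
      have ps: "pseudo_orbit f d1 y" "pseudo_orbit f (\<rho>/2) y" using h pseudo_mono[of f _ y] by auto
      have IH: "\<forall>i\<le>N. tdist ((f^^i) z) (y (j + int i)) < min \<rho> e1"
        using d1(2) ps h by auto
      show "tdist ((f^^i) z) (y (j + int i)) < \<rho>"
      proof (cases "i \<le> N")
        case True then show ?thesis using IH by auto
      next
        case False
        then have iN: "i = Suc N" using i by simp
        have "tdist ((f^^N) z) (y (j + int N)) < e1" using IH by auto
        then have a: "tdist (f ((f^^N) z)) (f (y (j + int N))) < \<rho>/2" using e1 by blast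
        have b: "tdist (f (y (j + int N))) (y (j + int (Suc N))) < \<rho>/2"
          using spec[OF ps(2)[unfolded pseudo_orbit_def], of "j + int (Suc N)"] by simp
        have "tdist (f ((f^^N) z)) (y (j + int (Suc N))) < \<rho>/2 + \<rho>/2" by (rule tdist_triangle[OF a b])
        then have "tdist ((f^^Suc N) z) (y (j + int (Suc N))) < \<rho>" by simp
        then show ?thesis using iN by simp
      qed
    qed
  qed
qed

lemma shadow_bwd:
  assumes "C1a_torus_diffeo f Df"
  shows "\<forall>\<rho>>0. \<exists>\<delta>>0. \<forall>y j z. pseudo_orbit f \<delta> y \<and> tdist z (y j) < \<delta> \<longrightarrow>
           (\<forall>i\<le>N. tdist ((finv f^^i) z) (y (j - int i)) < \<rho>)"
proof (induction N)
  case 0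
  show ?case by (intro allI impI, rule_tac x=\<rho> in exI) auto
next
  case (Suc N)
  obtain g where g: "\<forall>\<epsilon>>0. \<exists>\<delta>>0. \<forall>a b. tdist a b < \<delta> \<longrightarrow> tdist (g a) (g b) < \<epsilon>"
    "\<forall>a. finv f a - g a \<in> Zd" "\<forall>b. b - g (f b) \<in> Zd" using C1a_g[OF assms] by metis
  show ?case
  proof (intro allI impI)
    fix \<rho> :: real assume r: "\<rho> > 0"
    obtain e1 where e1: "e1 > 0" "\<forall>a b. tdist a b < e1 \<longrightarrow> tdist (g a) (g b) < \<rho>"
      using g(1) r by auto
    obtain d1 where d1: "d1 > 0" "\<forall>y j z. pseudo_orbit f d1 y \<and> tdist z (y j) < d1 \<longrightarrow>
           (\<forall>i\<le>N. tdist ((finv f^^i) z) (y (j - int i)) < min \<rho> (e1/2))"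
      using Suc[rule_format, of "min \<rho> (e1/2)"] r e1(1) by auto
    show "\<exists>\<delta>>0. \<forall>y j z. pseudo_orbit f \<delta> y \<and> tdist z (y j) < \<delta> \<longrightarrow>
           (\<forall>i\<le>Suc N. tdist ((finv f^^i) z) (y (j - int i)) < \<rho>)"
    proof (intro exI[of _ "min d1 (e1/2)"] conjI allI impI)
      show "0 < min d1 (e1/2)" using d1 e1 by simp
      fix y j z i assume h: "pseudo_orbit f (min d1 (e1/2)) y \<and> tdist z (y j) < min d1 (e1/2)"
        and i: "i \<le> Suc N"
      have ps: "pseudo_orbit f d1 y" "pseudo_orbit f (e1/2) y" using h pseudo_mono[of f _ y] by auto
      have IH: "\<forall>i\<le>N. tdist ((finv f^^i) z) (y (j - int i)) < min \<rho> (e1/2)"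
        using d1(2) ps h by auto
      show "tdist ((finv f^^i) z) (y (j - int i)) < \<rho>"
      proof (cases "i \<le> N")
        case True then show ?thesis using IH by auto
      next
        case False
        then have iN: "i = Suc N" using i by simp
        let ?a = "(finv f^^N) z" let ?b = "y (j - int N - 1)"
        have a: "tdist ?a (y (j - int N)) < e1/2" using IH by auto
        have c: "tdist (f ?b) (y (j - int N)) < e1/2"
          using spec[OF ps(2)[unfolded pseudo_orbit_def], of "j - int N"] by simp
        have d: "tdist (y (j - int N)) (f ?b) < e1/2" by (rule tdist_sym[OF c])
        have "tdist ?a (f ?b) < e1/2 + e1/2" by (rule tdist_triangle[OF a d])
        then have "tdist ?a (f ?b) < e1" by simp
        then have "tdist (g ?a) (g (f ?b)) < \<rho>" using e1 by blast
        then have "tdist (finv f ?a) ?b < \<rho>" using tdist_shift g(2,3) by blast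
        moreover have "j - int N - 1 = j - int (Suc N)" by simp
        ultimately show ?thesis using iN by simp
      qed
    qed
  qed
qed

lemma shadow:
  assumes "C1a_torus_diffeo f Df" "\<rho> > 0"
  shows "\<exists>\<delta>>0. \<forall>y j z. pseudo_orbit f \<delta> y \<and> tdist z (y j) < \<delta> \<longrightarrow>
           (\<forall>i. \<bar>i\<bar> \<le> int N \<longrightarrow> tdist (orbit f z i) (y (j + i)) < \<rho>)"
proof -
  obtain d1 where d1: "d1 > 0" "\<forall>y j z. pseudo_orbit f d1 y \<and> tdist z (y j) < d1 \<longrightarrow>
           (\<forall>i\<le>N. tdist ((f^^i) z) (y (j + int i)) < \<rho>)" using shadow_fwd[OF assms(1)] assms(2) by blast
  obtain d2 where d2: "d2 > 0" "\<forall>y j z. pseudo_orbit f d2 y \<and> tdist z (y j) < d2 \<longrightarrow>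
           (\<forall>i\<le>N. tdist ((finv f^^i) z) (y (j - int i)) < \<rho>)" using shadow_bwd[OF assms(1)] assms(2) by blast
  show ?thesis
  proof (intro exI[of _ "min d1 d2"] conjI allI impI)
    show "0 < min d1 d2" using d1 d2 by simp
    fix y j z i assume h: "pseudo_orbit f (min d1 d2) y \<and> tdist z (y j) < min d1 d2" and i: "\<bar>i\<bar> \<le> int N"
    have ps: "pseudo_orbit f d1 y" "pseudo_orbit f d2 y" "tdist z (y j) < d1" "tdist z (y j) < d2"
      using h pseudo_mono[of f _ y] by auto
    show "tdist (orbit f z i) (y (j + i)) < \<rho>"
    proof (cases "0 \<le> i")
      case True
      then have "nat i \<le> N" using i by simp
      moreover have "\<forall>i\<le>N. tdist ((f^^i) z) (y (j + int i)) < \<rho>" using d1(2) ps by blast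
      ultimately have "tdist ((f^^nat i) z) (y (j + int (nat i))) < \<rho>" by blast
      then show ?thesis using True by (simp add: orbit_def)
    next
      case False
      then have "nat (-i) \<le> N" using i by simp
      moreover have "\<forall>i\<le>N. tdist ((finv f^^i) z) (y (j - int i)) < \<rho>" using d2(2) ps by blast
      ultimately have "tdist ((finv f^^nat (-i)) z) (y (j - int (nat (-i)))) < \<rho>" by blast
      then show ?thesis using False by (simp add: orbit_def)
    qed
  qed
qed



definition Ew :: "nat \<Rightarrow> int \<Rightarrow> real" where "Ew n k = exp (\<bar>real_of_int k\<bar> / real n)"

lemma Ew_pos: "0 < Ew n k" by (simp add: Ew_def)

lemma W_Ew: "exp (- \<bar>real_of_int k\<bar> / real n) * Ew n k = 1"
  unfolding Ew_def by (simp add: exp_add[symmetric])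

lemma Ew_W: "Ew n k * (exp (- \<bar>real_of_int k\<bar> / real n) * x) = x"
  by (simp add: Ew_def mult.assoc[symmetric] exp_add[symmetric])

lemma W_Ew2: "exp (- \<bar>real_of_int k\<bar> / real n) * (Ew n k * x) = x"
  by (simp add: Ew_def mult.assoc[symmetric] exp_add[symmetric])

lemma Ew_0: "Ew n 0 = 1" by (simp add: Ew_def)

lemma Ew_add: assumes "0 < n" shows "Ew n (a + b) \<le> Ew n a * Ew n b"
proof -
  have "\<bar>real_of_int (a+b)\<bar> / real n \<le> \<bar>real_of_int a\<bar> / real n + \<bar>real_of_int b\<bar> / real n"
    using assms by (simp add: add_divide_distrib[symmetric] divide_right_mono abs_triangle_ineq)
  then show ?thesis unfolding Ew_def by (simp add: exp_add[symmetric])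
qed

lemma Ew_m1: assumes "0 < n" shows "Ew n (i - 1) \<le> Ew n i * Ew n 1"
  using Ew_add[OF assms, of i "-1"] by (simp add: Ew_def)

lemma L1: assumes "\<eta> \<in> Xn n" shows "norm (\<eta> k) \<le> Ew n k * wnorm n \<eta>"
proof -
  have "exp (- \<bar>real_of_int k\<bar> / real n) * norm (\<eta> k) \<le> wnorm n \<eta>"
    using assms unfolding Xn_def wnorm_def by (auto intro: cSUP_upper)
  then have "Ew n k * (exp (- \<bar>real_of_int k\<bar> / real n) * norm (\<eta> k)) \<le> Ew n k * wnorm n \<eta>"
    using Ew_pos by (simp add: mult_left_mono)
  then show ?thesis by (simp only: Ew_W)
qed

lemma wnorm_nonneg: assumes "\<eta> \<in> Xn n" shows "0 \<le> wnorm n \<eta>"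
proof -
  have "exp (- \<bar>real_of_int 0\<bar> / real n) * norm (\<eta> 0) \<le> wnorm n \<eta>"
    using cSUP_upper[of 0 UNIV "\<lambda>k. exp (- \<bar>real_of_int k\<bar> / real n) * norm (\<eta> k)"] assms
    unfolding Xn_def wnorm_def by simp
  then show ?thesis by (smt (verit) exp_gt_zero norm_ge_zero mult_nonneg_nonneg)
qed

lemma L2: assumes "\<And>k. norm (\<eta> k) \<le> Ew n k * B" shows "\<eta> \<in> Xn n" "wnorm n \<eta> \<le> B"
proof -
  have b: "exp (- \<bar>real_of_int k\<bar> / real n) * norm (\<eta> k) \<le> B" for k
  proof -
    have "exp (- \<bar>real_of_int k\<bar> / real n) * norm (\<eta> k) \<le> exp (- \<bar>real_of_int k\<bar> / real n) * (Ew n k * B)"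
      using assms[of k] by (simp add: mult_left_mono)
    also have "\<dots> = B" by (rule W_Ew2)
    finally show ?thesis .
  qed
  then show "\<eta> \<in> Xn n" unfolding Xn_def by (intro CollectI bdd_aboveI2[where M=B])
  show "wnorm n \<eta> \<le> B" unfolding wnorm_def using b by (auto intro: cSUP_least)
qed

lemma zero_Xn: "((\<lambda>k. 0)::int \<Rightarrow> real^'d) \<in> Xn n" "wnorm n ((\<lambda>k. 0)::int \<Rightarrow> real^'d) \<le> 0"
  using L2[of "(\<lambda>k. 0)::int \<Rightarrow> real^'d" n 0] by auto

lemma O1: fixes T :: "(int \<Rightarrow> real^'d::finite) \<Rightarrow> (int \<Rightarrow> real^'d)" assumes "\<And>\<eta>. \<eta> \<in> Xn n \<Longrightarrow> wnorm n \<eta> \<le> 1 \<Longrightarrow> wnorm n (T \<eta>) \<le> c"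
  shows "op_norm n T \<le> c"
  unfolding op_norm_def
proof (rule cSup_least)
  show "(\<lambda>\<eta>. wnorm n (T \<eta>)) ` {\<eta> \<in> Xn n. wnorm n \<eta> \<le> 1} \<noteq> {}"
  proof -
    have "((\<lambda>k. 0)::int \<Rightarrow> real^'d) \<in> {\<eta> \<in> Xn n. wnorm n \<eta> \<le> 1}"
      using zero_Xn(1)[where 'd='d, of n] zero_Xn(2)[where 'd='d, of n] by (simp add: order_trans[OF _ zero_le_one])
    then show ?thesis by blast
  qed
qed (use assms in auto)

lemma O2: fixes U :: "(int \<Rightarrow> real^'d::finite) \<Rightarrow> (int \<Rightarrow> real^'d)" assumes b: "bounded_op n U" and on: "op_norm n U \<le> M" and e: "\<eta> \<in> Xn n"
  shows "wnorm n (U \<eta>) \<le> M * wnorm n \<eta>"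
proof -
  obtain C where C: "\<forall>\<eta>\<in>Xn n. wnorm n (U \<eta>) \<le> C * wnorm n \<eta>" using b unfolding bounded_op_def by blast
  have hom: "\<And>c \<eta>. \<eta> \<in> Xn n \<Longrightarrow> U (\<lambda>k. c *\<^sub>R \<eta> k) = (\<lambda>k. c *\<^sub>R U \<eta> k)"
    using b unfolding bounded_op_def by blast
  have UX: "\<And>\<eta>. \<eta> \<in> Xn n \<Longrightarrow> U \<eta> \<in> Xn n" using b unfolding bounded_op_def by blast
  have bdd: "bdd_above ((\<lambda>\<eta>. wnorm n (U \<eta>)) ` {\<eta> \<in> Xn n. wnorm n \<eta> \<le> 1})"
  proof (rule bdd_aboveI2)
    fix \<zeta> :: "int \<Rightarrow> real^'d" assume "\<zeta> \<in> {\<eta> \<in> Xn n. wnorm n \<eta> \<le> 1}"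
    then have "\<zeta> \<in> Xn n" "wnorm n \<zeta> \<le> 1" "0 \<le> wnorm n \<zeta>" using wnorm_nonneg by auto
    then have "C * wnorm n \<zeta> \<le> max C 0"
      by (metis max.cobounded1 max.cobounded2 mult_left_le mult_nonpos_nonneg order_trans linorder_le_cases)
    then show "wnorm n (U \<zeta>) \<le> max C 0" using C \<open>\<zeta> \<in> Xn n\<close> by (meson order_trans)
  qed
  define r where "r = wnorm n \<eta>"
  have r0: "0 \<le> r" using wnorm_nonneg[OF e] r_def by simp
  show ?thesis
  proof (cases "r = 0")
    case True
    have "norm (\<eta> k) \<le> 0" for k using L1[OF e, of k] True r_def by simp
    then have "\<eta> = (\<lambda>k. 0 *\<^sub>R \<eta> k)" by auto
    then have "U \<eta> = (\<lambda>k. 0 *\<^sub>R U \<eta> k)" using hom[OF e, of 0] by metis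
    then have "U \<eta> = (\<lambda>k. 0)" by simp
    then show ?thesis using zero_Xn[of n] True r_def by simp
  next
    case False
    then have rp: "r > 0" using r0 by simp
    define \<zeta> where "\<zeta> = (\<lambda>k. (1/r) *\<^sub>R \<eta> k)"
    have nz: "norm (\<zeta> k) \<le> Ew n k * 1" for k
      using L1[OF e, of k] rp unfolding \<zeta>_def r_def[symmetric] by (simp add: field_simps)
    have zX: "\<zeta> \<in> Xn n" "wnorm n \<zeta> \<le> 1" using L2[OF nz] by auto
    have "wnorm n (U \<zeta>) \<le> op_norm n U"
      unfolding op_norm_def by (rule cSup_upper) (use zX bdd in auto)
    then have wz: "wnorm n (U \<zeta>) \<le> M" using on by simp
    have Uz: "U \<zeta> = (\<lambda>k. (1/r) *\<^sub>R U \<eta> k)" unfolding \<zeta>_def by (rule hom[OF e])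
    have "norm (U \<eta> k) \<le> Ew n k * (M * r)" for k
    proof -
      have "norm (U \<zeta> k) \<le> Ew n k * M" using L1[OF UX[OF zX(1)], of k] wz Ew_pos[of n k]
        by (meson mult_left_mono order_trans less_imp_le)
      then have "norm (U \<eta> k) / r \<le> Ew n k * M" using Uz rp by simp
      then show ?thesis using rp by (simp add: field_simps)
    qed
    then show ?thesis unfolding r_def by (rule L2(2))
  qed
qed



lemma C1a_holder:
  assumes "C1a_torus_diffeo f Df"
  obtains \<alpha> C where "0 < \<alpha>" "\<alpha> \<le> 1" "\<forall>x y. norm (Df x - Df y) \<le> C * tdist x y powr \<alpha>"
  using assms unfolding C1a_torus_diffeo_def by blast

lemma Df_bound:
  fixes f :: "real^'d::finite \<Rightarrow> real^'d"
  assumes "C1a_torus_diffeo f Df"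
  shows "\<exists>Bd>0. \<forall>x. norm (Df x) \<le> Bd"
proof -
  obtain \<alpha> C where h: "0 < \<alpha>" "\<alpha> \<le> 1" "\<forall>x y. norm (Df x - Df y) \<le> C * tdist x y powr \<alpha>"
    using C1a_holder[OF assms] by blast
  have nb: "norm (Df x) \<le> norm (Df 0) + \<bar>C\<bar> * (1 + real CARD('d))" for x
  proof -
    let ?t = "tdist x 0"
    have t0: "0 \<le> ?t" by (rule tdist_nonneg)
    have tb: "?t \<le> real CARD('d)" by (rule tdist_bound)
    have p: "?t powr \<alpha> \<le> 1 + real CARD('d)"
    proof (cases "?t \<le> 1")
      case True
      then have "?t powr \<alpha> \<le> 1 powr \<alpha>" using powr_mono2[of \<alpha> ?t 1] h t0 by simp
      then show ?thesis by simp
    next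
      case False
      then have "?t powr \<alpha> \<le> ?t powr 1" using powr_mono[of \<alpha> 1 ?t] h by simp
      then show ?thesis using tb t0 False by simp
    qed
    have "norm (Df x - Df 0) \<le> C * ?t powr \<alpha>" using h by blast
    also have "\<dots> \<le> \<bar>C\<bar> * ?t powr \<alpha>" by (simp add: mult_right_mono)
    also have "\<dots> \<le> \<bar>C\<bar> * (1 + real CARD('d))" using p by (simp add: mult_left_mono)
    finally have "norm (Df x - Df 0) \<le> \<bar>C\<bar> * (1 + real CARD('d))" .
    moreover have "norm (Df x) \<le> norm (Df 0) + norm (Df x - Df 0)"
      using norm_triangle_ineq[of "Df 0" "Df x - Df 0"] by simp
    ultimately show ?thesis by linarith
  qed
  have "\<forall>x. norm (Df x) \<le> norm (Df 0) + \<bar>C\<bar> * (1 + real CARD('d)) + 1"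
  proof
    fix x show "norm (Df x) \<le> norm (Df 0) + \<bar>C\<bar> * (1 + real CARD('d)) + 1" using nb[of x] by linarith
  qed
  moreover have "0 < norm (Df 0) + \<bar>C\<bar> * (1 + real CARD('d)) + 1"
    using norm_ge_zero[of "Df 0"] abs_ge_zero[of C] by (smt (verit) mult_nonneg_nonneg of_nat_0_le_iff)
  ultimately show ?thesis
    by (intro exI[of _ "norm (Df 0) + \<bar>C\<bar> * (1 + real CARD('d)) + 1"]) auto
qed

lemma Df_close:
  fixes f :: "real^'d::finite \<Rightarrow> real^'d"
  assumes "C1a_torus_diffeo f Df" "\<epsilon> > 0"
  shows "\<exists>\<rho>>0. \<forall>a b. tdist a b < \<rho> \<longrightarrow> norm (Df a - Df b) \<le> \<epsilon>"
proof -
  obtain \<alpha> C where h: "0 < \<alpha>" "\<alpha> \<le> 1" "\<forall>x y. norm (Df x - Df y) \<le> C * tdist x y powr \<alpha>"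
    using C1a_holder[OF assms(1)] by blast
  define q where "q = \<epsilon> / (\<bar>C\<bar> + 1)"
  have q0: "q > 0" using assms(2) unfolding q_def by (simp add: add_nonneg_pos)
  define \<rho> where "\<rho> = q powr (1/\<alpha>)"
  have r0: "\<rho> > 0" unfolding \<rho>_def using q0 by simp
  have rq: "\<rho> powr \<alpha> = q" unfolding \<rho>_def using q0 h(1) by (simp add: powr_powr)
  show ?thesis
  proof (intro exI[of _ \<rho>] conjI allI impI r0)
    fix a b :: "real^'d" assume ab: "tdist a b < \<rho>"
    have "tdist a b powr \<alpha> \<le> \<rho> powr \<alpha>" using powr_mono2[of \<alpha> "tdist a b" \<rho>] h ab tdist_nonneg[of a b] by simp
    then have p: "tdist a b powr \<alpha> \<le> q" using rq by simp
    have "norm (Df a - Df b) \<le> C * tdist a b powr \<alpha>" using h by blast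
    also have "\<dots> \<le> \<bar>C\<bar> * tdist a b powr \<alpha>" by (simp add: mult_right_mono)
    also have "\<dots> \<le> \<bar>C\<bar> * q" using p by (simp add: mult_left_mono)
    also have "\<dots> \<le> \<epsilon>" unfolding q_def using assms(2)
      by (simp add: field_simps)
    finally show "norm (Df a - Df b) \<le> \<epsilon>" .
  qed
qed



lemma app_diff: "norm (blinfun_apply A v - blinfun_apply B v) \<le> norm (A - B) * norm v"
  by (metis blinfun.diff_left norm_blinfun)

lemma Xn_add: fixes a b :: "int \<Rightarrow> real^'d::finite"
  assumes "a \<in> Xn n" "b \<in> Xn n" shows "(\<lambda>k. a k + b k) \<in> Xn n"
proof (rule L2(1))
  fix k
  have "norm (a k + b k) \<le> norm (a k) + norm (b k)" by (rule norm_triangle_ineq)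
  also have "\<dots> \<le> Ew n k * wnorm n a + Ew n k * wnorm n b" using L1[OF assms(1)] L1[OF assms(2)] by (rule add_mono)
  finally show "norm (a k + b k) \<le> Ew n k * (wnorm n a + wnorm n b)" by (simp add: algebra_simps)
qed

lemma shift_Xn: fixes \<eta> :: "int \<Rightarrow> real^'d::finite"
  assumes "\<eta> \<in> Xn n" "0 < n"
  shows "(\<lambda>i. \<eta> (i + j)) \<in> Xn n" "wnorm n (\<lambda>i. \<eta> (i + j)) \<le> Ew n j * wnorm n \<eta>"
proof -
  have b: "norm (\<eta> (i + j)) \<le> Ew n i * (Ew n j * wnorm n \<eta>)" for i
  proof -
    have "norm (\<eta> (i + j)) \<le> Ew n (i + j) * wnorm n \<eta>" by (rule L1[OF assms(1)])
    also have "\<dots> \<le> (Ew n i * Ew n j) * wnorm n \<eta>"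
      by (rule mult_right_mono[OF Ew_add[OF assms(2)] wnorm_nonneg[OF assms(1)]])
    finally show ?thesis by (simp add: mult.assoc)
  qed
  show "(\<lambda>i. \<eta> (i + j)) \<in> Xn n" by (rule L2(1)[OF b])
  show "wnorm n (\<lambda>i. \<eta> (i + j)) \<le> Ew n j * wnorm n \<eta>" by (rule L2(2)[OF b])
qed

definition phi :: "nat \<Rightarrow> int \<Rightarrow> real" where "phi K i = max 0 (1 - \<bar>real_of_int i\<bar> / real K)"

lemma phi_lip: assumes "0 < K" shows "\<bar>phi K i - phi K (i - 1)\<bar> \<le> 1 / real K"
proof -
  let ?a = "\<bar>real_of_int i\<bar>" let ?b = "\<bar>real_of_int (i - 1)\<bar>"
  have "(1 - ?a / real K) - (1 - ?b / real K) = (?b - ?a) / real K" by (simp add: diff_divide_distrib)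
  then have "\<bar>(1 - ?a / real K) - (1 - ?b / real K)\<bar> = \<bar>?b - ?a\<bar> / real K" by simp
  also have "\<dots> \<le> 1 / real K"
  proof (rule divide_right_mono)
    have "\<bar>?b - ?a\<bar> \<le> \<bar>real_of_int (i - 1) - real_of_int i\<bar>" by (rule abs_triangle_ineq3)
    then show "\<bar>?b - ?a\<bar> \<le> 1" by simp
  qed simp
  finally show ?thesis unfolding phi_def by linarith
qed

lemma phi_range: "0 \<le> phi K i" "phi K i \<le> 1" "phi K 0 = 1"
  unfolding phi_def by auto

lemma phi_zero: assumes "0 < K" "\<not> \<bar>i\<bar> \<le> int K" shows "phi K i = 0"
proof -
  have "real K \<le> \<bar>real_of_int i\<bar>" using assms(2) by linarith
  then have "1 \<le> \<bar>real_of_int i\<bar> / real K" using assms(1) by (simp add: field_simps)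
  then show ?thesis unfolding phi_def by simp
qed



lemma core:
  fixes x y :: "int \<Rightarrow> real^'d::finite" and Df :: "real^'d \<Rightarrow> ((real^'d) \<Rightarrow>\<^sub>L (real^'d))"
    and U :: "(int \<Rightarrow> real^'d) \<Rightarrow> (int \<Rightarrow> real^'d)" and \<eta> :: "int \<Rightarrow> real^'d"
  assumes ci: "cont_inverse n (Gamma Df x) U" and opn: "op_norm n U \<le> M" and n0: "0 < n"
    and Bd: "\<forall>z. norm (Df z) \<le> Bd"
    and close: "\<forall>i. \<bar>i\<bar> \<le> int K + 1 \<longrightarrow> norm (Df (x i) - Df (y (i + j))) \<le> \<epsilon>"
    and K0: "0 < K" and \<eta>X: "\<eta> \<in> Xn n" and M0: "0 \<le> M" and \<epsilon>0: "0 \<le> \<epsilon>"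
  shows "norm (U (\<lambda>i. Gamma Df y \<eta> (i + j)) 0 - \<eta> j)
          \<le> (M * \<epsilon> * Ew n 1 + 2 * M * M * Bd * Bd * (Ew n 1)^2 / real K) * (Ew n j * wnorm n \<eta>)"
proof -
  define G where "G = Gamma Df x"
  have GX: "\<And>\<zeta>. \<zeta> \<in> Xn n \<Longrightarrow> G \<zeta> \<in> Xn n" using ci unfolding cont_inverse_def G_def by blast
  have bU: "bounded_op n U" using ci unfolding cont_inverse_def by blast
  have inv1: "\<And>\<zeta>. \<zeta> \<in> Xn n \<Longrightarrow> U (G \<zeta>) = \<zeta>" using ci unfolding cont_inverse_def G_def by blast
  have inv2: "\<And>\<zeta>. \<zeta> \<in> Xn n \<Longrightarrow> G (U \<zeta>) = \<zeta>" using ci unfolding cont_inverse_def G_def by blast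
  have UX: "\<And>\<zeta>. \<zeta> \<in> Xn n \<Longrightarrow> U \<zeta> \<in> Xn n" using bU unfolding bounded_op_def by blast
  have Uadd: "\<And>a b. a \<in> Xn n \<Longrightarrow> b \<in> Xn n \<Longrightarrow> U (\<lambda>k. a k + b k) = (\<lambda>k. U a k + U b k)"
    using bU unfolding bounded_op_def by blast
  have UM: "\<And>\<zeta>. \<zeta> \<in> Xn n \<Longrightarrow> wnorm n (U \<zeta>) \<le> M * wnorm n \<zeta>" using O2[OF bU opn] by blast
  define e1 where "e1 = Ew n 1"
  define R where "R = Ew n j * wnorm n \<eta>"
  define e where "e = (\<lambda>i. \<eta> (i + j))"
  have e10: "0 \<le> e1" unfolding e1_def using Ew_pos less_imp_le by blast
  have R0: "0 \<le> R" unfolding R_def using Ew_pos[of n j] wnorm_nonneg[OF \<eta>X] by simp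
  have eX: "e \<in> Xn n" and we: "wnorm n e \<le> R"
    unfolding e_def R_def using shift_Xn[OF \<eta>X n0] by auto
  have Bd0: "0 \<le> Bd" using Bd norm_ge_zero order_trans by blast
  have eb: "norm (e (i - 1)) \<le> Ew n i * (e1 * R)" for i
  proof -
    have "norm (e (i - 1)) \<le> Ew n (i - 1) * wnorm n e" by (rule L1[OF eX])
    also have "\<dots> \<le> (Ew n i * e1) * R"
      using Ew_m1[OF n0, of i] we wnorm_nonneg[OF eX] Ew_pos[of n "i-1"] unfolding e1_def
      by (meson mult_mono less_imp_le order_trans Ew_pos mult_nonneg_nonneg)
    finally show ?thesis by (simp add: mult.assoc)
  qed
  define w where "w = (\<lambda>i. Df (x (i-1)) (e (i-1)) - Df (y (i - 1 + j)) (e (i-1)))"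
  have wb: "norm (w i) \<le> (2*Bd*e1*R) * Ew n i" for i
  proof -
    have "norm (w i) \<le> norm (Df (x (i-1)) - Df (y (i - 1 + j))) * norm (e (i-1))"
      unfolding w_def by (rule app_diff)
    also have "\<dots> \<le> (2 * Bd) * (Ew n i * (e1 * R))"
    proof (rule mult_mono)
      have "norm (Df (x (i-1)) - Df (y (i - 1 + j))) \<le> norm (Df (x (i-1))) + norm (Df (y (i - 1 + j)))"
        by (rule norm_triangle_ineq4)
      then show "norm (Df (x (i-1)) - Df (y (i - 1 + j))) \<le> 2 * Bd" using Bd by (smt (verit))
    qed (use eb Bd0 in auto)
    finally show ?thesis by (simp add: algebra_simps)
  qed
  have wn: "norm (w i) \<le> (\<epsilon>*e1*R) * Ew n i" if "\<bar>i\<bar> \<le> int K" for i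
  proof -
    have "norm (w i) \<le> norm (Df (x (i-1)) - Df (y (i - 1 + j))) * norm (e (i-1))"
      unfolding w_def by (rule app_diff)
    also have "\<dots> \<le> \<epsilon> * (Ew n i * (e1 * R))"
    proof (rule mult_mono)
      show "norm (Df (x (i-1)) - Df (y (i - 1 + j))) \<le> \<epsilon>" using close that by auto
    qed (use eb \<epsilon>0 in auto)
    finally show ?thesis by (simp add: algebra_simps)
  qed
  define w1 where "w1 = (\<lambda>i. if \<bar>i\<bar> \<le> int K then w i else 0)"
  define w2 where "w2 = (\<lambda>i. if \<bar>i\<bar> \<le> int K then 0 else w i)"
  have nn1: "0 \<le> (\<epsilon>*e1*R) * Ew n i" for i using \<epsilon>0 e10 R0 Ew_pos[of n i] by simp
  have nn2: "0 \<le> (2*Bd*e1*R) * Ew n i" for i using Bd0 e10 R0 Ew_pos[of n i] by simp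
  have w1b: "norm (w1 i) \<le> Ew n i * (\<epsilon>*e1*R)" for i
    using wn[of i] nn1[of i] unfolding w1_def by (simp add: mult.commute)
  have w2b: "norm (w2 i) \<le> Ew n i * (2*Bd*e1*R)" for i
    using wb[of i] nn2[of i] unfolding w2_def by (simp add: mult.commute)
  have w1X: "w1 \<in> Xn n" and ww1: "wnorm n w1 \<le> \<epsilon>*e1*R" using L2[OF w1b] by auto
  have w2X: "w2 \<in> Xn n" and ww2: "wnorm n w2 \<le> 2*Bd*e1*R" using L2[OF w2b] by auto
  define P where "P = (\<lambda>i. G e i + w1 i)"
  have PX: "P \<in> Xn n" unfolding P_def by (rule Xn_add[OF GX[OF eX] w1X])
  have dec: "(\<lambda>i. Gamma Df y \<eta> (i + j)) = (\<lambda>i. P i + w2 i)"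
  proof
    fix i
    have s: "w1 i + w2 i = w i" unfolding w1_def w2_def by simp
    have ij: "i + j - 1 = i - 1 + j" by simp
    show "Gamma Df y \<eta> (i + j) = P i + w2 i"
      unfolding P_def add.assoc s unfolding Gamma_def G_def w_def e_def ij by simp
  qed
  have main: "U (\<lambda>i. Gamma Df y \<eta> (i + j)) 0 - \<eta> j = U w1 0 + U w2 0"
  proof -
    have "U (\<lambda>i. Gamma Df y \<eta> (i + j)) = (\<lambda>k. U P k + U w2 k)" unfolding dec by (rule Uadd[OF PX w2X])
    moreover have "U P = (\<lambda>k. U (G e) k + U w1 k)" unfolding P_def by (rule Uadd[OF GX[OF eX] w1X])
    moreover have "U (G e) = e" by (rule inv1[OF eX])
    ultimately show ?thesis unfolding e_def by simp
  qed
  have b1: "norm (U w1 0) \<le> M * (\<epsilon>*e1*R)"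
  proof -
    have "norm (U w1 0) \<le> Ew n 0 * wnorm n (U w1)" by (rule L1[OF UX[OF w1X]])
    also have "\<dots> \<le> M * wnorm n w1" using UM[OF w1X] by (simp add: Ew_0)
    also have "\<dots> \<le> M * (\<epsilon>*e1*R)" using ww1 M0 by (rule mult_left_mono)
    finally show ?thesis .
  qed
  define u where "u = U w2"
  have uX: "u \<in> Xn n" unfolding u_def by (rule UX[OF w2X])
  have wu: "wnorm n u \<le> M * (2*Bd*e1*R)"
    unfolding u_def using UM[OF w2X] mult_left_mono[OF ww2 M0] by linarith
  have wu0: "0 \<le> wnorm n u" by (rule wnorm_nonneg[OF uX])
  have Gu: "G u = w2" unfolding u_def by (rule inv2[OF w2X])
  define v where "v = (\<lambda>i. phi K i *\<^sub>R u i)"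
  have vb: "norm (v i) \<le> Ew n i * wnorm n u" for i
  proof -
    have "norm (v i) = phi K i * norm (u i)" unfolding v_def using phi_range(1) by simp
    also have "\<dots> \<le> 1 * norm (u i)" using phi_range(1,2) by (intro mult_right_mono) auto
    also have "\<dots> \<le> Ew n i * wnorm n u" using L1[OF uX] by simp
    finally show ?thesis .
  qed
  have vX: "v \<in> Xn n" using L2(1)[OF vb] .
  define c where "c = (\<lambda>i. (phi K i - phi K (i - 1)) *\<^sub>R Df (x (i - 1)) (u (i - 1)))"
  have cb: "norm (c i) \<le> Ew n i * ((1 / real K) * Bd * e1 * wnorm n u)" for i
  proof -
    have "norm (c i) = \<bar>phi K i - phi K (i - 1)\<bar> * norm (Df (x (i - 1)) (u (i - 1)))"
      unfolding c_def by simp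
    also have "\<dots> \<le> (1 / real K) * (Bd * (Ew n (i - 1) * wnorm n u))"
    proof (rule mult_mono)
      show "\<bar>phi K i - phi K (i - 1)\<bar> \<le> 1 / real K" by (rule phi_lip[OF K0])
      have "norm (Df (x (i - 1)) (u (i - 1))) \<le> norm (Df (x (i - 1))) * norm (u (i - 1))" by (rule norm_blinfun)
      also have "\<dots> \<le> Bd * (Ew n (i - 1) * wnorm n u)"
        using Bd L1[OF uX, of "i-1"] Bd0 by (intro mult_mono) auto
      finally show "norm (Df (x (i - 1)) (u (i - 1))) \<le> Bd * (Ew n (i - 1) * wnorm n u)" .
    qed (use Bd0 wu0 Ew_pos[of n "i-1"] in auto)
    also have "\<dots> \<le> (1 / real K) * (Bd * ((Ew n i * e1) * wnorm n u))"
      using Ew_m1[OF n0, of i] Bd0 wu0 unfolding e1_def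
      by (intro mult_left_mono mult_right_mono) auto
    finally show ?thesis by (simp add: algebra_simps)
  qed
  have cX: "c \<in> Xn n" and wc: "wnorm n c \<le> (1 / real K) * Bd * e1 * wnorm n u" using L2[OF cb] by auto
  have Gv: "G v = c"
  proof
    fix i
    have w2i: "w2 i = u i - Df (x (i - 1)) (u (i - 1))" using Gu unfolding G_def Gamma_def by metis
    have z: "phi K i *\<^sub>R w2 i = 0"
    proof (cases "\<bar>i\<bar> \<le> int K")
      case True then show ?thesis unfolding w2_def by simp
    next
      case False then show ?thesis using phi_zero[OF K0 False] by simp
    qed
    have "G v i = phi K i *\<^sub>R u i - phi K (i - 1) *\<^sub>R Df (x (i - 1)) (u (i - 1))"
      unfolding G_def Gamma_def v_def by (simp add: blinfun.scaleR_right)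
    also have "\<dots> = phi K i *\<^sub>R w2 i + c i"
      unfolding w2i c_def by (simp add: scaleR_diff_right scaleR_diff_left)
    finally show "G v i = c i" using z by simp
  qed
  have Uc: "U c = v" using inv1[OF vX] Gv by simp
  have b2: "norm (U w2 0) \<le> M * ((1 / real K) * Bd * e1 * (M * (2*Bd*e1*R)))"
  proof -
    have "U w2 0 = v 0" unfolding u_def[symmetric] v_def using phi_range(3) by simp
    then have "norm (U w2 0) = norm (U c 0)" using Uc by simp
    also have "\<dots> \<le> Ew n 0 * wnorm n (U c)" by (rule L1[OF UX[OF cX]])
    also have "\<dots> \<le> M * wnorm n c" using UM[OF cX] by (simp add: Ew_0)
    also have "\<dots> \<le> M * ((1 / real K) * Bd * e1 * wnorm n u)" using wc M0 by (rule mult_left_mono)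
    also have "\<dots> \<le> M * ((1 / real K) * Bd * e1 * (M * (2*Bd*e1*R)))"
      using wu M0 Bd0 e10 by (intro mult_left_mono) auto
    finally show ?thesis .
  qed
  have "norm (U (\<lambda>i. Gamma Df y \<eta> (i + j)) 0 - \<eta> j) \<le> norm (U w1 0) + norm (U w2 0)"
    unfolding main by (rule norm_triangle_ineq)
  also have "\<dots> \<le> M * (\<epsilon>*e1*R) + M * ((1 / real K) * Bd * e1 * (M * (2*Bd*e1*R)))"
    using b1 b2 by (rule add_mono)
  also have "\<dots> = (M * \<epsilon> * Ew n 1 + 2 * M * M * Bd * Bd * (Ew n 1)^2 / real K) * (Ew n j * wnorm n \<eta>)"
    unfolding e1_def R_def by (simp add: field_simps power2_eq_square)
  finally show ?thesis .
qed



lemma Theta_bounded: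
  fixes Us :: "int \<Rightarrow> (int \<Rightarrow> real^'d::finite) \<Rightarrow> (int \<Rightarrow> real^'d)"
  assumes h: "\<forall>j. bounded_op n (Us j) \<and> op_norm n (Us j) \<le> M" and n0: "0 < n" and M0: "0 \<le> M"
  shows "bounded_op n (\<lambda>\<xi> j. Us j (\<lambda>i. \<xi> (i + j)) 0)"
    and "\<forall>\<xi>\<in>Xn n. wnorm n ((\<lambda>\<xi> j. Us j (\<lambda>i. \<xi> (i + j)) 0) \<xi>) \<le> M * wnorm n \<xi>"
proof -
  define \<Theta> where "\<Theta> = (\<lambda>\<xi> j. Us j (\<lambda>i. \<xi> (i + j)) 0)"
  have UX: "\<And>j \<zeta>. \<zeta> \<in> Xn n \<Longrightarrow> Us j \<zeta> \<in> Xn n" using h unfolding bounded_op_def by blast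
  have Uadd: "\<And>j a b. a \<in> Xn n \<Longrightarrow> b \<in> Xn n \<Longrightarrow> Us j (\<lambda>k. a k + b k) = (\<lambda>k. Us j a k + Us j b k)"
    using h unfolding bounded_op_def by blast
  have Uhom: "\<And>j c a. a \<in> Xn n \<Longrightarrow> Us j (\<lambda>k. c *\<^sub>R a k) = (\<lambda>k. c *\<^sub>R Us j a k)"
    using h unfolding bounded_op_def by blast
  have UM: "\<And>j \<zeta>. \<zeta> \<in> Xn n \<Longrightarrow> wnorm n (Us j \<zeta>) \<le> M * wnorm n \<zeta>" using O2 h by blast
  have tb: "norm (\<Theta> \<xi> j) \<le> Ew n j * (M * wnorm n \<xi>)" if \<xi>X: "\<xi> \<in> Xn n" for \<xi> j
  proof -
    have SX: "(\<lambda>i. \<xi> (i + j)) \<in> Xn n" and ws: "wnorm n (\<lambda>i. \<xi> (i + j)) \<le> Ew n j * wnorm n \<xi>"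
      using shift_Xn[OF \<xi>X n0] by auto
    have "norm (\<Theta> \<xi> j) \<le> Ew n 0 * wnorm n (Us j (\<lambda>i. \<xi> (i + j)))"
      unfolding \<Theta>_def by (rule L1[OF UX[OF SX]])
    also have "\<dots> \<le> M * wnorm n (\<lambda>i. \<xi> (i + j))" using UM[OF SX] by (simp add: Ew_0)
    also have "\<dots> \<le> M * (Ew n j * wnorm n \<xi>)" using ws M0 by (rule mult_left_mono)
    finally show ?thesis by (simp add: algebra_simps)
  qed
  have 2: "\<forall>\<xi>\<in>Xn n. wnorm n (\<Theta> \<xi>) \<le> M * wnorm n \<xi>" using L2(2)[OF tb] by blast
  then show "\<forall>\<xi>\<in>Xn n. wnorm n ((\<lambda>\<xi> j. Us j (\<lambda>i. \<xi> (i + j)) 0) \<xi>) \<le> M * wnorm n \<xi>"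
    unfolding \<Theta>_def .
  have "bounded_op n \<Theta>"
    unfolding bounded_op_def
  proof (intro conjI ballI allI)
    fix \<xi> :: "int \<Rightarrow> real^'d" assume "\<xi> \<in> Xn n" then show "\<Theta> \<xi> \<in> Xn n" using L2(1)[OF tb] by blast
  next
    fix \<xi> \<zeta> :: "int \<Rightarrow> real^'d" assume a: "\<xi> \<in> Xn n" "\<zeta> \<in> Xn n"
    show "\<Theta> (\<lambda>k. \<xi> k + \<zeta> k) = (\<lambda>k. \<Theta> \<xi> k + \<Theta> \<zeta> k)"
    proof
      fix j
      have "Us j (\<lambda>i. \<xi> (i + j) + \<zeta> (i + j)) = (\<lambda>k. Us j (\<lambda>i. \<xi> (i + j)) k + Us j (\<lambda>i. \<zeta> (i + j)) k)"
        using Uadd shift_Xn(1)[OF a(1) n0] shift_Xn(1)[OF a(2) n0] by blast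
      then show "\<Theta> (\<lambda>k. \<xi> k + \<zeta> k) j = \<Theta> \<xi> j + \<Theta> \<zeta> j" unfolding \<Theta>_def by simp
    qed
  next
    fix c and \<xi> :: "int \<Rightarrow> real^'d" assume a: "\<xi> \<in> Xn n"
    show "\<Theta> (\<lambda>k. c *\<^sub>R \<xi> k) = (\<lambda>k. c *\<^sub>R \<Theta> \<xi> k)"
    proof
      fix j
      have "Us j (\<lambda>i. c *\<^sub>R \<xi> (i + j)) = (\<lambda>k. c *\<^sub>R Us j (\<lambda>i. \<xi> (i + j)) k)"
        using Uhom shift_Xn(1)[OF a n0] by blast
      then show "\<Theta> (\<lambda>k. c *\<^sub>R \<xi> k) j = c *\<^sub>R \<Theta> \<xi> j" unfolding \<Theta>_def by simp
    qed
  next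
    show "\<exists>C. \<forall>\<eta>\<in>Xn n. wnorm n (\<Theta> \<eta>) \<le> C * wnorm n \<eta>" using 2 by blast
  qed
  then show "bounded_op n (\<lambda>\<xi> j. Us j (\<lambda>i. \<xi> (i + j)) 0)" unfolding \<Theta>_def .
qed



theorem lemma5p3:
  fixes f :: "real^'d \<Rightarrow> real^'d"
    and Df :: "real^'d \<Rightarrow> ((real^'d) \<Rightarrow>\<^sub>L (real^'d))"
    and \<Lambda> :: "(real^'d) set"
    and n m :: nat
  assumes "C1a_torus_diffeo f Df"
    and "torus_set \<Lambda>"
    and "\<forall>x. x \<in> \<Lambda> \<longleftrightarrow> f x \<in> \<Lambda>"
    and "0 < n"
    and "\<forall>x\<in>\<Lambda>. \<exists>U. cont_inverse n (Gamma Df (orbit f x)) U"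
    and "0 < m"
  shows "\<exists>\<delta>>0. \<forall>y. pseudo_orbit f \<delta> y \<and> (\<forall>j. \<exists>z\<in>Lstar f Df n m \<Lambda>. tdist (y j) z < \<delta>) \<longrightarrow>
           (\<exists>\<Theta>. bounded_op n \<Theta> \<and>
              op_norm n (\<lambda>\<eta>. (\<lambda>k. \<Theta> (Gamma Df y \<eta>) k - \<eta> k)) \<le> 1/2 \<and>
              op_norm n \<Theta> \<le> real m * real CARD('d) * sqrt (real CARD('d)))"
proof -
  note C1 = assms(1) and n0 = assms(4) and m0 = assms(6)
  obtain Bd where Bd: "Bd > 0" "\<forall>x. norm (Df x) \<le> Bd" using Df_bound[OF C1] by blast
  define M where "M = real m"
  define e1 where "e1 = Ew n 1"
  have M0: "0 < M" unfolding M_def using m0 by simp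
  have e10: "0 < e1" unfolding e1_def by (rule Ew_pos)
  define \<epsilon> where "\<epsilon> = 1 / (4 * M * e1)"
  have \<epsilon>0: "0 < \<epsilon>" unfolding \<epsilon>_def using M0 e10 by simp
  define K where "K = nat (ceiling (8 * M * M * Bd * Bd * e1^2)) + 1"
  have K0: "0 < K" unfolding K_def by simp
  have Kb: "8 * M * M * Bd * Bd * e1^2 \<le> real K" unfolding K_def by linarith
  have coef: "M * \<epsilon> * e1 + 2 * M * M * Bd * Bd * e1^2 / real K \<le> 1/2"
  proof -
    have a: "M * \<epsilon> * e1 = 1/4" unfolding \<epsilon>_def using M0 e10 by (simp add: field_simps)
    have "2 * M * M * Bd * Bd * e1^2 / real K \<le> 1/4"
      using Kb K0 by (simp add: field_simps)
    then show ?thesis using a by linarith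
  qed
  obtain \<rho> where \<rho>: "\<rho> > 0" "\<forall>a b. tdist a b < \<rho> \<longrightarrow> norm (Df a - Df b) \<le> \<epsilon>"
    using Df_close[OF C1 \<epsilon>0] by blast
  obtain \<delta> where \<delta>: "\<delta> > 0" "\<forall>y j z. pseudo_orbit f \<delta> y \<and> tdist z (y j) < \<delta> \<longrightarrow>
           (\<forall>i. \<bar>i\<bar> \<le> int (K + 1) \<longrightarrow> tdist (orbit f z i) (y (j + i)) < \<rho>)"
    using shadow[OF C1 \<rho>(1), of "K+1"] by blast
  show ?thesis
  proof (intro exI[of _ \<delta>] conjI allI impI \<delta>(1))
    fix y :: "int \<Rightarrow> real^'d"
    assume hy: "pseudo_orbit f \<delta> y \<and> (\<forall>j. \<exists>z\<in>Lstar f Df n m \<Lambda>. tdist (y j) z < \<delta>)"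
    define z where "z = (\<lambda>j. SOME z. z \<in> Lstar f Df n m \<Lambda> \<and> tdist (y j) z < \<delta>)"
    have z: "z j \<in> Lstar f Df n m \<Lambda> \<and> tdist (y j) (z j) < \<delta>" for j
      unfolding z_def using hy by (metis (mono_tags, lifting) someI_ex)
    define Us where "Us = (\<lambda>j. SOME U. cont_inverse n (Gamma Df (orbit f (z j))) U \<and> op_norm n U \<le> real m)"
    have Us: "cont_inverse n (Gamma Df (orbit f (z j))) (Us j) \<and> op_norm n (Us j) \<le> M" for j
    proof -
      have "\<exists>U. cont_inverse n (Gamma Df (orbit f (z j))) U \<and> op_norm n U \<le> real m"
        using z[of j] unfolding Lstar_def by blast
      then show ?thesis unfolding Us_def M_def by (rule someI_ex)
    qed
    have bUs: "\<forall>j. bounded_op n (Us j) \<and> op_norm n (Us j) \<le> M"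
      using Us unfolding cont_inverse_def by blast
    define \<Theta> where "\<Theta> = (\<lambda>\<xi> j. Us j (\<lambda>i. \<xi> (i + j)) 0)"
    have bT: "bounded_op n \<Theta>" and wT: "\<forall>\<xi>\<in>Xn n. wnorm n (\<Theta> \<xi>) \<le> M * wnorm n \<xi>"
      unfolding \<Theta>_def using Theta_bounded[OF bUs n0] M0 by auto
    have close: "\<forall>i. \<bar>i\<bar> \<le> int K + 1 \<longrightarrow> norm (Df (orbit f (z j) i) - Df (y (i + j))) \<le> \<epsilon>" for j
    proof (intro allI impI)
      fix i :: int assume i: "\<bar>i\<bar> \<le> int K + 1"
      have "tdist (z j) (y j) < \<delta>" using z[of j] tdist_sym by blast
      then have "tdist (orbit f (z j) i) (y (j + i)) < \<rho>" using \<delta>(2) hy i by auto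
      then show "norm (Df (orbit f (z j) i) - Df (y (i + j))) \<le> \<epsilon>" using \<rho>(2) by (simp add: add.commute)
    qed
    show "\<exists>\<Theta>. bounded_op n \<Theta> \<and>
              op_norm n (\<lambda>\<eta>. (\<lambda>k. \<Theta> (Gamma Df y \<eta>) k - \<eta> k)) \<le> 1/2 \<and>
              op_norm n \<Theta> \<le> real m * real CARD('d) * sqrt (real CARD('d))"
    proof (intro exI[of _ \<Theta>] conjI bT)
      show "op_norm n (\<lambda>\<eta>. (\<lambda>k. \<Theta> (Gamma Df y \<eta>) k - \<eta> k)) \<le> 1/2"
      proof (rule O1)
        fix \<eta> :: "int \<Rightarrow> real^'d" assume \<eta>X: "\<eta> \<in> Xn n" and \<eta>1: "wnorm n \<eta> \<le> 1"
        have hb: "norm (\<Theta> (Gamma Df y \<eta>) j - \<eta> j) \<le> Ew n j * (1/2)" for j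
        proof -
          have "norm (\<Theta> (Gamma Df y \<eta>) j - \<eta> j)
              \<le> (M * \<epsilon> * Ew n 1 + 2 * M * M * Bd * Bd * (Ew n 1)^2 / real K) * (Ew n j * wnorm n \<eta>)"
            unfolding \<Theta>_def
            by (rule core[OF conjunct1[OF Us[of j]] conjunct2[OF Us[of j]] n0 Bd(2) close K0 \<eta>X])
               (use M0 \<epsilon>0 in auto)
          also have "\<dots> \<le> (1/2) * (Ew n j * 1)"
          proof (rule mult_mono)
            show "M * \<epsilon> * Ew n 1 + 2 * M * M * Bd * Bd * (Ew n 1)\<^sup>2 / real K \<le> 1 / 2"
              using coef unfolding e1_def .
            show "Ew n j * wnorm n \<eta> \<le> Ew n j * 1" using \<eta>1 Ew_pos[of n j] by simp
          qed (use Ew_pos[of n j] wnorm_nonneg[OF \<eta>X] in auto)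
          finally show ?thesis by simp
        qed
        show "wnorm n (\<lambda>k. \<Theta> (Gamma Df y \<eta>) k - \<eta> k) \<le> 1/2" by (rule L2(2)) (rule hb)
      qed
      show "op_norm n \<Theta> \<le> real m * real CARD('d) * sqrt (real CARD('d))"
      proof (rule O1)
        fix \<eta> :: "int \<Rightarrow> real^'d" assume \<eta>X: "\<eta> \<in> Xn n" and \<eta>1: "wnorm n \<eta> \<le> 1"
        have "wnorm n (\<Theta> \<eta>) \<le> M * wnorm n \<eta>" using wT \<eta>X by blast
        also have "\<dots> \<le> M * 1" using \<eta>1 M0 by simp
        also have "\<dots> \<le> real m * real CARD('d) * sqrt (real CARD('d))"
        proof -
          have c1: "1 \<le> real CARD('d)" by simp
          then have "1 \<le> sqrt (real CARD('d))" by simp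
          then have "1 \<le> real CARD('d) * sqrt (real CARD('d))" using c1 by (metis mult_mono' mult_1 zero_le_one)
          then show ?thesis unfolding M_def using M0 M_def by (simp add: mult.assoc)
        qed
        finally show "wnorm n (\<Theta> \<eta>) \<le> real m * real CARD('d) * sqrt (real CARD('d))" .
      qed
    qed
  qed
qed

end
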